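(* Let $k_1,k_2,k_3,k_4$ be nonzero real constants and consider the equation $$u_t=k_3 e^{k_4 u}+\frac{1}{x}\bigl(x k_1 e^{k_2 u} u_x\bigr)_x$$ together with its Lie point symmetry $X=(k_4-k_2)x\frac{\partial}{\partial x}+2k_4 t\frac{\partial}{\partial t}-2\frac{\partial}{\partial u}$. The invariant solution of this equation corresponding to $X$ is $$u=\ln\left(\frac{h\bigl(x^{2}t^{\frac{k_2}{k_4}-1}\bigr)^{\frac{1}{k_2}}}{t^{\frac{1}{k_4}}}\right),$$ where $h(z)$ satisfies the similarity reduction equation $$4k_1k_4 z h''(z)+\left(4k_1k_4+(k_4-k_2)\frac{z}{h(z)}\right)h'(z)+k_2k_3k_4\,(h(z))^{\frac{k_4}{k_2}}+k_2=0.$$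
   Context: A function $u=u(x,t)$ is an invariant solution of the equation corresponding to the infinitesimal symmetry $X=\xi\frac{\partial}{\partial x}+\tau\frac{\partial}{\partial t}+\eta\frac{\partial}{\partial u}$ if and only if (i) $u$ satisfies the equation and (ii) $u$ defines an invariant surface of $X$, i.e. $\xi\frac{\partial u}{\partial x}+\tau\frac{\partial u}{\partial t}-\eta=0$. Here $x>0$, $t>0$ (cylindrical radial variable and time), and $z=x^2t^{\frac{k_2}{k_4}-1}$ is the similarity variable. *)

theory Defs
  imports "HOL-Analysis.Analysis"
begin

definition satisfies_eq ::
  "real \<Rightarrow> real \<Rightarrow> real \<Rightarrow> real \<Rightarrow> (real \<Rightarrow> real \<Rightarrow> real)
   \<Rightarrow> (real \<Rightarrow> real \<Rightarrow> real) \<Rightarrow> (real \<Rightarrow> real \<Rightarrow> real) \<Rightarrow> bool" where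
  "satisfies_eq k1 k2 k3 k4 u ux ut \<longleftrightarrow>
     (\<forall>x t. x > 0 \<and> t > 0 \<longrightarrow>
        ((\<lambda>s. u s t) has_real_derivative ux x t) (at x) \<and>
        ((\<lambda>\<tau>. u x \<tau>) has_real_derivative ut x t) (at t) \<and>
        (\<exists>F. ((\<lambda>s. s * k1 * exp (k2 * u s t) * ux s t) has_real_derivative F) (at x) \<and>
             ut x t = k3 * exp (k4 * u x t) + F / x))"

text \<open>Invariant surface condition xi u_x + tau u_t - eta = 0 for
  X = (k4-k2) x d/dx + 2 k4 t d/dt - 2 d/du.\<close>
definition invariant_surface ::
  "real \<Rightarrow> real \<Rightarrow> (real \<Rightarrow> real \<Rightarrow> real) \<Rightarrow> (real \<Rightarrow> real \<Rightarrow> real) \<Rightarrow> bool" where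
  "invariant_surface k2 k4 ux ut \<longleftrightarrow>
     (\<forall>x t. x > 0 \<and> t > 0 \<longrightarrow>
        (k4 - k2) * x * ux x t + 2 * k4 * t * ut x t - (-2) = 0)"

definition invariant_solution ::
  "real \<Rightarrow> real \<Rightarrow> real \<Rightarrow> real \<Rightarrow> (real \<Rightarrow> real \<Rightarrow> real) \<Rightarrow> bool" where
  "invariant_solution k1 k2 k3 k4 u \<longleftrightarrow>
     (\<exists>ux ut. satisfies_eq k1 k2 k3 k4 u ux ut \<and> invariant_surface k2 k4 ux ut)"

end

theory Submission
  imports Defs
begin

lemma lnchain:
  fixes g :: "real \<Rightarrow> real"
  assumes "(g has_real_derivative D) (at x)" "g x > 0"
  shows "((\<lambda>s. ln (g s) / k) has_real_derivative D / (g x * k)) (at x)"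
  using DERIV_cdivide[OF DERIV_chain2[OF DERIV_ln[OF assms(2)] assms(1)], of k] assms(2)
  by (simp add: field_simps)

theorem theorem2:
  fixes k1 k2 k3 k4 :: real and h h' h'' :: "real \<Rightarrow> real"
  assumes "k1 \<noteq> 0" "k2 \<noteq> 0" "k3 \<noteq> 0" "k4 \<noteq> 0"
    and hpos: "\<And>z. z > 0 \<Longrightarrow> h z > 0"
    and hd1: "\<And>z. z > 0 \<Longrightarrow> (h has_real_derivative h' z) (at z)"
    and hd2: "\<And>z. z > 0 \<Longrightarrow> (h' has_real_derivative h'' z) (at z)"
    and ode: "\<And>z. z > 0 \<Longrightarrow>
       4 * k1 * k4 * z * h'' z + (4 * k1 * k4 + (k4 - k2) * z / h z) * h' z
       + k2 * k3 * k4 * (h z) powr (k4 / k2) + k2 = 0"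
  shows "invariant_solution k1 k2 k3 k4
           (\<lambda>x t. ln (h (x\<^sup>2 * t powr (k2 / k4 - 1)) powr (1 / k2) / t powr (1 / k4)))"
proof -
  note k = assms(1-4)
  define a where "a = k2 / k4 - 1"
  define u where "u = (\<lambda>x t. ln (h (x\<^sup>2 * t powr (k2 / k4 - 1)) powr (1 / k2) / t powr (1 / k4)))"
  define ux where "ux = (\<lambda>x t. h' (x\<^sup>2 * t powr a) * (2 * x * t powr a) / (h (x\<^sup>2 * t powr a) * k2))"
  define ut where "ut = (\<lambda>x t. h' (x\<^sup>2 * t powr a) * (x\<^sup>2 * (a * t powr (a - 1))) / (h (x\<^sup>2 * t powr a) * k2) - 1 / (k4 * t))"
  have ueq: "u s t = ln (h (s\<^sup>2 * t powr a)) / k2 - ln t / k4" if "s > 0" "t > 0" for s t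
  proof -
    have "h (s\<^sup>2 * t powr a) > 0" using hpos that by simp
    then show ?thesis using that unfolding u_def a_def
      by (simp add: ln_div ln_powr)
  qed
  have expk2: "exp (k2 * u s t) = h (s\<^sup>2 * t powr a) / t powr (k2 / k4)" if "s > 0" "t > 0" for s t
  proof -
    have H: "h (s\<^sup>2 * t powr a) > 0" using hpos that by simp
    have "k2 * u s t = ln (h (s\<^sup>2 * t powr a)) - (k2 / k4) * ln t"
      using ueq[OF that] k by (simp add: field_simps)
    then show ?thesis using H that by (simp add: exp_diff powr_def)
  qed
  have expk4: "exp (k4 * u s t) = h (s\<^sup>2 * t powr a) powr (k4 / k2) / t" if "s > 0" "t > 0" for s t
  proof -
    have H: "h (s\<^sup>2 * t powr a) > 0" using hpos that by simp
    have "k4 * u s t = (k4 / k2) * ln (h (s\<^sup>2 * t powr a)) - ln t"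
      using ueq[OF that] k by (simp add: field_simps)
    then show ?thesis using H that by (simp add: exp_diff powr_def)
  qed
  have "satisfies_eq k1 k2 k3 k4 u ux ut"
    unfolding satisfies_eq_def
  proof (intro allI impI conjI)
    fix x t :: real assume xt: "x > 0 \<and> t > 0"
    hence x: "x > 0" and t: "t > 0" by auto
    define c where "c = t powr a"
    have c: "c > 0" using t by (simp add: c_def)
    have z: "x\<^sup>2 * c > 0" using x c by simp
    have Hz: "h (x\<^sup>2 * c) > 0" using hpos z by simp
    have hz: "((\<lambda>s. h (s\<^sup>2 * c)) has_real_derivative h' (x\<^sup>2 * c) * (2 * x * c)) (at x)"
      by (rule DERIV_chain2[where g="\<lambda>s. s\<^sup>2 * c", OF hd1[OF z]]) (auto intro!: derivative_eq_intros)
    have d1: "((\<lambda>s. ln (h (s\<^sup>2 * c)) / k2 - ln t / k4) has_real_derivative ux x t) (at x)"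
      using DERIV_diff[OF lnchain[OF hz Hz, of k2] DERIV_const[of "ln t / k4"]]
      unfolding ux_def c_def[symmetric] by simp
    show "((\<lambda>s. u s t) has_real_derivative ux x t) (at x)"
      by (rule has_field_derivative_transform_within_open[OF d1, of "{0<..}"])
         (use x t ueq c_def in auto)
  next
    fix x t :: real assume xt: "x > 0 \<and> t > 0"
    hence x: "x > 0" and t: "t > 0" by auto
    have z: "x\<^sup>2 * t powr a > 0" using x t by simp
    have Hz: "h (x\<^sup>2 * t powr a) > 0" using hpos z by simp
    have hz: "((\<lambda>s. h (x\<^sup>2 * s powr a)) has_real_derivative h' (x\<^sup>2 * t powr a) * (x\<^sup>2 * (a * t powr (a - 1)))) (at t)"
      by (rule DERIV_chain2[where g="\<lambda>s. x\<^sup>2 * s powr a", OF hd1[OF z]]) (use t in \<open>auto intro!: derivative_eq_intros\<close>)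
    have d1: "((\<lambda>s. ln (h (x\<^sup>2 * s powr a)) / k2 - ln s / k4) has_real_derivative ut x t) (at t)"
      using DERIV_diff[OF lnchain[OF hz Hz, of k2] lnchain[OF DERIV_ident t, of k4]]
      unfolding ut_def by (simp add: mult.commute)
    show "((\<lambda>s. u x s) has_real_derivative ut x t) (at t)"
      by (rule has_field_derivative_transform_within_open[OF d1, of "{0<..}"])
         (use x t ueq in auto)
  next
    fix x t :: real assume xt: "x > 0 \<and> t > 0"
    hence x: "x > 0" and t: "t > 0" by auto
    define c where "c = t powr a"
    define T where "T = t powr (k2 / k4)"
    have c: "c > 0" using t by (simp add: c_def)
    have T: "T > 0" using t by (simp add: T_def)
    have cT: "c = T / t" unfolding c_def T_def a_def using t by (simp add: powr_diff)
    have z: "x\<^sup>2 * c > 0" using x c by simp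
    have Hz: "h (x\<^sup>2 * c) > 0" using hpos z by simp
    have hz: "((\<lambda>s. h' (s\<^sup>2 * c)) has_real_derivative h'' (x\<^sup>2 * c) * (2 * x * c)) (at x)"
      by (rule DERIV_chain2[where g="\<lambda>s. s\<^sup>2 * c", OF hd2[OF z]]) (auto intro!: derivative_eq_intros)
    define F where "F = 2 * k1 * c / (k2 * T) * (2 * x * h' (x\<^sup>2 * c) + x\<^sup>2 * (h'' (x\<^sup>2 * c) * (2 * x * c)))"
    have d1: "((\<lambda>s. 2 * k1 * c / (k2 * T) * (s\<^sup>2 * h' (s\<^sup>2 * c))) has_real_derivative F) (at x)"
    proof -
      have p2: "((\<lambda>s. s\<^sup>2) has_real_derivative 2 * x) (at x)"
        by (auto intro!: derivative_eq_intros)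
      show ?thesis using DERIV_cmult[OF DERIV_mult'[OF p2 hz], of "2 * k1 * c / (k2 * T)"]
        unfolding F_def by (simp add: algebra_simps)
    qed
    have eqF: "2 * k1 * c / (k2 * T) * (s\<^sup>2 * h' (s\<^sup>2 * c)) = s * k1 * exp (k2 * u s t) * ux s t"
      if "s \<in> {0<..}" for s
    proof -
      have s: "s > 0" using that by simp
      have "h (s\<^sup>2 * c) > 0" using hpos s c by simp
      then show ?thesis using expk2[OF s t] k T unfolding ux_def c_def[symmetric] T_def[symmetric]
        by (simp add: field_simps power2_eq_square)
    qed
    have dF: "((\<lambda>s. s * k1 * exp (k2 * u s t) * ux s t) has_real_derivative F) (at x)"
      by (rule has_field_derivative_transform_within_open[OF d1, of "{0<..}"])
         (use x eqF in auto)
    have main: "ut x t = k3 * exp (k4 * u x t) + F / x"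
    proof -
      have e4: "exp (k4 * u x t) = h (x\<^sup>2 * c) powr (k4 / k2) / t"
        using expk4[OF x t] c_def by simp
      have o: "k2 * k3 * k4 * h (x\<^sup>2 * c) powr (k4 / k2) = -(4 * k1 * k4 * (x\<^sup>2 * c) * h'' (x\<^sup>2 * c) + (4 * k1 * k4 + (k4 - k2) * (x\<^sup>2 * c) / h (x\<^sup>2 * c)) * h' (x\<^sup>2 * c) + k2)"
        using ode[OF z] by linarith
      have P: "h (x\<^sup>2 * c) powr (k4 / k2) = -(4 * k1 * k4 * (x\<^sup>2 * c) * h'' (x\<^sup>2 * c) + (4 * k1 * k4 + (k4 - k2) * (x\<^sup>2 * c) / h (x\<^sup>2 * c)) * h' (x\<^sup>2 * c) + k2) / (k2 * k3 * k4)"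
        using o k by (simp add: field_simps)
      have pa: "t powr (a - 1) = c / t" unfolding c_def using t by (simp add: powr_diff)
      show ?thesis unfolding e4 P ut_def pa F_def c_def[symmetric]
        using k x t T Hz unfolding cT a_def
        by (simp add: field_simps power2_eq_square)
    qed
    show "\<exists>F. ((\<lambda>s. s * k1 * exp (k2 * u s t) * ux s t) has_real_derivative F) (at x) \<and>
             ut x t = k3 * exp (k4 * u x t) + F / x"
      using dF main by blast
  qed
  moreover have "invariant_surface k2 k4 ux ut"
    unfolding invariant_surface_def
  proof (intro allI impI)
    fix x t :: real assume xt: "x > 0 \<and> t > 0"
    hence x: "x > 0" and t: "t > 0" by auto
    have z: "x\<^sup>2 * t powr a > 0" using x t by simp
    have Hz: "h (x\<^sup>2 * t powr a) > 0" using hpos z by simp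
    have pa: "t powr (a - 1) = t powr a / t" using t by (simp add: powr_diff)
    show "(k4 - k2) * x * ux x t + 2 * k4 * t * ut x t - (-2) = 0"
      unfolding ux_def ut_def pa using k x t Hz unfolding a_def
      by (simp add: field_simps power2_eq_square)
  qed
  ultimately show ?thesis unfolding invariant_solution_def u_def by blast
qed

end
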